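(* Let $x, a$ be positive real numbers and $k \geq 2$ an integer. Then \[ k\,\psi_{ak}(xk) > \psi_a(x), \] where $\psi_c(y) \coloneqq \psi(y+c)-\psi(y)$ for $c,y>0$.
   Context: $\psi=\Gamma'/\Gamma$ is the digamma function. *)

theory Defs
  imports "HOL-Analysis.Analysis"
begin

definition psi_shift :: "real \<Rightarrow> real \<Rightarrow> real" where
  "psi_shift c y = Digamma (y + c) - Digamma y"

end

theory Submission
  imports Defs
begin

lemma psi_shift_LIMSEQ:
  fixes y c :: real
  assumes "y > 0" "c > 0"
  shows "(\<lambda>N. \<Sum>n<N. (inverse (y + real n) - inverse (y + c + real n)))
           \<longlonglongrightarrow> psi_shift c y"
proof -
  have 1: "(\<lambda>m. ln (real m) - (\<Sum>n<m. inverse (y + c + real n))) \<longlonglongrightarrow> Digamma (y + c)"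
    using Digamma_LIMSEQ[of "y + c"] assms by simp
  have 2: "(\<lambda>m. ln (real m) - (\<Sum>n<m. inverse (y + real n))) \<longlonglongrightarrow> Digamma y"
    using Digamma_LIMSEQ[of y] assms by simp
  from tendsto_diff[OF 1 2] show ?thesis
    by (simp add: psi_shift_def sum_subtractf)
qed

theorem lemma5p4:
  fixes x a :: real and k :: nat
  assumes "x > 0" and "a > 0" and "k \<ge> 2"
  shows "real k * psi_shift (a * real k) (x * real k) > psi_shift a x"
proof -
  have kpos: "real k > 0" using assms by simp
  define G where "G n = real k * (inverse (x * real k + real n) - inverse (x * real k + a * real k + real n))" for n :: nat
  have Gpos: "G n > 0" for n
  proof -
    have "0 < x * real k + real n" using assms kpos by (simp add: add_pos_nonneg)
    moreover have "x * real k + real n < x * real k + a * real k + real n" using assms kpos by simp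
    ultimately have "inverse (x * real k + a * real k + real n) < inverse (x * real k + real n)"
      by (intro less_imp_inverse_less) auto
    then show ?thesis unfolding G_def using kpos by simp
  qed
  have Gk: "G (k * m) = inverse (x + real m) - inverse (x + a + real m)" for m
  proof -
    have "x * real k + real (k * m) = real k * (x + real m)" by (simp add: algebra_simps)
    moreover have "x * real k + a * real k + real (k * m) = real k * (x + a + real m)" by (simp add: algebra_simps)
    ultimately show ?thesis unfolding G_def using kpos
      by (simp add: right_diff_distrib mult.assoc[symmetric])
  qed
  define S where "S N = (\<Sum>n<N. (inverse (x + real n) - inverse (x + a + real n)))" for N
  define T where "T N = (\<Sum>n<N. (inverse (x * real k + real n) - inverse (x * real k + a * real k + real n)))" for N
  have S: "S \<longlonglongrightarrow> psi_shift a x" unfolding S_def using psi_shift_LIMSEQ[of x a] assms by simp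
  have T0: "T \<longlonglongrightarrow> psi_shift (a * real k) (x * real k)"
    unfolding T_def using psi_shift_LIMSEQ[of "x * real k" "a * real k"] assms kpos by simp
  have sm: "strict_mono (\<lambda>N. k * N)" using assms by (simp add: strict_mono_def)
  have T1: "(\<lambda>N. real k * T (k * N)) \<longlonglongrightarrow> real k * psi_shift (a * real k) (x * real k)"
    using tendsto_mult[OF tendsto_const LIMSEQ_subseq_LIMSEQ[OF T0 sm]] by (simp add: o_def)
  have ineq: "S N + G 1 \<le> real k * T (k * N)" if "N \<ge> 1" for N
  proof -
    have "real k * T (k * N) = (\<Sum>n<k*N. G n)" unfolding T_def G_def by (simp add: sum_distrib_left)
    also have "\<dots> \<ge> (\<Sum>n\<in>insert 1 ((\<lambda>m. k * m) ` {..<N}). G n)"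
    proof (rule sum_mono2)
      show "finite {..<k*N}" by simp
      show "insert 1 ((\<lambda>m. k * m) ` {..<N}) \<subseteq> {..<k*N}"
      proof -
        have "2 * 1 \<le> k * N" using that assms by (intro mult_mono) auto
        then show ?thesis using assms by auto
      qed
      show "\<And>b. b \<in> {..<k * N} - insert 1 ((*) k ` {..<N}) \<Longrightarrow> 0 \<le> G b"
        using Gpos less_imp_le by blast
    qed
    also have "(\<Sum>n\<in>insert 1 ((\<lambda>m. k * m) ` {..<N}). G n) = G 1 + (\<Sum>n\<in>(\<lambda>m. k * m) ` {..<N}. G n)"
    proof (rule sum.insert)
      show "finite ((*) k ` {..<N})" by simp
      show "1 \<notin> (*) k ` {..<N}" using assms by auto
    qed
    also have "(\<Sum>n\<in>(\<lambda>m. k * m) ` {..<N}. G n) = (\<Sum>m<N. G (k * m))"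
      using assms by (subst sum.reindex) (auto simp: inj_on_def)
    also have "\<dots> = S N" unfolding S_def using Gk by simp
    finally show ?thesis by simp
  qed
  have "psi_shift a x + G 1 \<le> real k * psi_shift (a * real k) (x * real k)"
    by (rule LIMSEQ_le[OF tendsto_add[OF S tendsto_const] T1]) (use ineq in blast)
  with Gpos[of 1] show ?thesis by linarith
qed

end
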